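(* Let $(E,\mathcal{B})$ be a measurable space and $m$ a $\sigma$-additive measure on $\mathcal{B}$. Consider the assertions: (1) $m$ is finite; (2) $m$ is $\sigma$-finite; (3) $m$ is $\sigma$-principal; (4) $m$ is CCC; (5) $m$ is localizable. Then (1) $\Rightarrow$ (2) $\Rightarrow$ (3) $\Rightarrow$ (4) $\Rightarrow$ (5). Moreover, assuming Zorn's lemma, (4) $\Rightarrow$ (3).
   Context: A $\sigma$-ideal of $\mathcal{B}$ is a nonempty $\mathcal{I}\subset\mathcal{B}$ closed under countable unions and such that $B\subset I\in\mathcal{I}$, $B\in\mathcal{B}$ imply $B\in\mathcal{I}$. $m$ is $\sigma$-principal if for every $\sigma$-ideal $\mathcal{I}$ there is $L\in\mathcal{I}$ with $m(S\setminus L)=0$ for all $S\in\mathcal{I}$. $m$ is CCC if every family of pairwise disjoint elements of $\mathcal{B}$ of positive measure is countable. $m$ is localizable if for every $\sigma$-ideal $\mathcal{I}$ of $\mathcal{B}$ there is $L\in\mathcal{B}$ such that (i) $m(S\setminus L)=0$ for all $S\in\mathcal{I}$, and (ii) whenever $B\in\mathcal{B}$ satisfies $m(S\setminus B)=0$ for all $S\in\mathcal{I}$, then $m(L\setminus B)=0$. *)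

theory Defs
  imports "HOL-Analysis.Analysis"
begin

definition sigma_ideal :: "'a measure \<Rightarrow> 'a set set \<Rightarrow> bool" where
  "sigma_ideal M I \<longleftrightarrow> I \<subseteq> sets M \<and> I \<noteq> {} \<and>
     (\<forall>f :: nat \<Rightarrow> 'a set. range f \<subseteq> I \<longrightarrow> (\<Union>i. f i) \<in> I) \<and>
     (\<forall>B S. S \<in> I \<longrightarrow> B \<in> sets M \<longrightarrow> B \<subseteq> S \<longrightarrow> B \<in> I)"

definition sigma_principal :: "'a measure \<Rightarrow> bool" where
  "sigma_principal M \<longleftrightarrow> (\<forall>I. sigma_ideal M I \<longrightarrow>
     (\<exists>L\<in>I. \<forall>S\<in>I. emeasure M (S - L) = 0))"

definition CCC :: "'a measure \<Rightarrow> bool" where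
  "CCC M \<longleftrightarrow> (\<forall>F. F \<subseteq> sets M \<longrightarrow> disjoint F \<longrightarrow>
     (\<forall>A\<in>F. emeasure M A > 0) \<longrightarrow> countable F)"

definition localizable :: "'a measure \<Rightarrow> bool" where
  "localizable M \<longleftrightarrow> (\<forall>I. sigma_ideal M I \<longrightarrow>
     (\<exists>L\<in>sets M. (\<forall>S\<in>I. emeasure M (S - L) = 0) \<and>
        (\<forall>B\<in>sets M. (\<forall>S\<in>I. emeasure M (S - B) = 0) \<longrightarrow> emeasure M (L - B) = 0)))"

end

theory Submission
  imports Defs
begin

lemma disj_count:
  fixes M :: "'a measure"
  assumes C: "C \<in> sets M" "emeasure M C < \<infinity>" and F: "F \<subseteq> sets M" "disjoint F"
  shows "countable {A\<in>F. measure M (A \<inter> C) > 0}"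
proof -
  let ?m = "\<lambda>A. measure M (A \<inter> C)"
  have *: "{A\<in>F. ?m A > 0} = (\<Union>n. {A\<in>F. 1 / Suc n < ?m A})"
  proof safe
    fix A assume "A \<in> F" "?m A > 0"
    then obtain n where "1 / real (Suc n) < ?m A"
      by (metis nat_approx_posE)
    then show "A \<in> (\<Union>n. {A\<in>F. 1 / Suc n < ?m A})" using \<open>A \<in> F\<close> by auto
  next
    fix A n assume "1 / real (Suc n) < ?m A"
    then show "?m A > 0" by (smt (verit) of_nat_0_less_iff divide_pos_pos zero_less_Suc)
  qed
  have fin: "finite {A\<in>F. 1 / Suc n < ?m A}" for n
  proof (rule ccontr)
    assume "infinite {A\<in>F. 1 / Suc n < ?m A}" (is "infinite ?X")
    define k where "k = Suc n * (nat (ceiling (measure M C)) + 1)"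
    obtain X where X: "finite X" "card X = k" "X \<subseteq> ?X"
      using infinite_arbitrarily_large[OF \<open>infinite ?X\<close>, of k] by blast
    have fm: "A \<inter> C \<in> fmeasurable M" if "A \<in> F" for A
    proof (rule fmeasurableI2[OF fmeasurableI[OF C]])
      show "A \<inter> C \<subseteq> C" by (rule Int_lower2)
      show "A \<inter> C \<in> sets M" using that F(1) C(1) by (intro sets.Int) auto
    qed
    have "measure M (\<Union>A\<in>X. A \<inter> C) = (\<Sum>A\<in>X. ?m A)"
    proof (rule measure_UNION')
      show "pairwise (\<lambda>i j. disjnt (i \<inter> C) (j \<inter> C)) X"
      proof (rule pairwiseI)
        fix i j assume "i \<in> X" "j \<in> X" "i \<noteq> j"
        then have "disjnt i j" using F(2) X(3) by (metis (no_types, lifting) mem_Collect_eq subsetD disjointD disjnt_def)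
        then show "disjnt (i \<inter> C) (j \<inter> C)" by (simp add: disjnt_def inf_assoc inf_left_commute inf_commute)
      qed
      show "finite X" by (rule X(1))
      show "i \<inter> C \<in> fmeasurable M" if "i \<in> X" for i using that X(3) fm by blast
    qed
    moreover have "measure M (\<Union>A\<in>X. A \<inter> C) \<le> measure M C"
    proof (rule measure_mono_fmeasurable)
      show "(\<Union>A\<in>X. A \<inter> C) \<in> sets M"
        using X(1) proof (rule sets.finite_UN)
        show "i \<inter> C \<in> sets M" if "i \<in> X" for i using fm[of i] that X(3) by (auto simp: fmeasurable_def)
      qed
    qed (use C in \<open>auto intro: fmeasurableI\<close>)
    moreover have "(\<Sum>A\<in>X. 1 / real (Suc n)) \<le> (\<Sum>A\<in>X. ?m A)"
      using X by (intro sum_mono) auto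
    moreover have "(\<Sum>A\<in>X. 1 / real (Suc n)) = real k / Suc n"
      using X by simp
    moreover have "real k / Suc n = real (nat (ceiling (measure M C))) + 1"
      unfolding k_def by (simp add: field_simps)
    moreover have "measure M C \<le> real (nat (ceiling (measure M C)))"
      by linarith
    ultimately show False by linarith
  qed
  show ?thesis unfolding * by (intro countable_UN countableI_type countable_finite[OF fin])
qed

lemma sf_CCC:
  fixes M :: "'a measure"
  assumes "sigma_finite_measure M" shows "CCC M"
proof -
  interpret sigma_finite_measure M by fact
  obtain A :: "nat \<Rightarrow> 'a set" where A: "range A \<subseteq> sets M" "(\<Union>i. A i) = space M"
    "\<And>i. emeasure M (A i) \<noteq> \<infinity>"
    using sigma_finite by metis
  have Ai: "A i \<in> sets M" for i using A(1) by blast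
  show ?thesis unfolding CCC_def
  proof (intro allI impI)
    fix F assume F: "F \<subseteq> sets M" "disjoint F" "\<forall>B\<in>F. emeasure M B > 0"
    have "F \<subseteq> (\<Union>i. {B\<in>F. measure M (B \<inter> A i) > 0})"
    proof
      fix B assume B: "B \<in> F"
      have BM: "B \<in> sets M" using B F(1) by blast
      show "B \<in> (\<Union>i. {B\<in>F. measure M (B \<inter> A i) > 0})"
      proof (rule ccontr)
        assume "\<not> ?thesis"
        then have m0: "measure M (B \<inter> A i) = 0" for i using B
          by (metis (mono_tags, lifting) UN_I iso_tuple_UNIV_I mem_Collect_eq measure_nonneg order_less_le)
        have "B \<inter> A i \<in> null_sets M" for i
        proof -
          have "B \<inter> A i \<in> fmeasurable M"
            by (rule fmeasurableI2[OF fmeasurableI[OF Ai]]) (use A(3)[of i] BM Ai in \<open>auto simp: less_top\<close>)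
          then have "emeasure M (B \<inter> A i) = 0" using m0[of i] by (simp add: emeasure_eq_measure2)
          then show ?thesis using BM Ai by (intro null_setsI) (auto)
        qed
        then have "(\<Union>i. B \<inter> A i) \<in> null_sets M" by (rule null_sets_UN)
        moreover have "(\<Union>i. B \<inter> A i) = B" using A(2) BM sets.sets_into_space by blast
        ultimately have "B \<in> null_sets M" by simp
        then have "emeasure M B = 0" by (rule null_setsD1)
        then show False using F(3) B by (metis less_irrefl)
      qed
    qed
    moreover have "countable (\<Union>i. {B\<in>F. measure M (B \<inter> A i) > 0})"
    proof (rule countable_UN)
      fix i show "countable {B\<in>F. measure M (B \<inter> A i) > 0}"
        using Ai A(3)[of i] F(1,2) by (intro disj_count) (auto simp: less_top)
    qed simp
    ultimately show "countable F" by (rule countable_subset)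
  qed
qed

lemma ideal_empty: "sigma_ideal M I \<Longrightarrow> {} \<in> I"
  unfolding sigma_ideal_def by blast

lemma ideal_countable_Union:
  assumes I: "sigma_ideal M I" and G: "countable G" "G \<subseteq> I"
  shows "\<Union>G \<in> I"
proof (cases "G = {}")
  case True then show ?thesis using ideal_empty[OF I] by simp
next
  case False
  have "range (from_nat_into G) \<subseteq> I" using G False by (auto intro: from_nat_into)
  then have "(\<Union>i. from_nat_into G i) \<in> I" using I unfolding sigma_ideal_def by blast
  moreover have "(\<Union>i. from_nat_into G i) = \<Union>G"
    using range_from_nat_into[OF False G(1)] by (simp only:)
  ultimately show ?thesis by simp
qed

lemma SP_CCC:
  fixes M :: "'a measure"
  assumes SP: "sigma_principal M" shows "CCC M"
  unfolding CCC_def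
proof (intro allI impI)
  fix F assume F: "F \<subseteq> sets M" "disjoint F" "\<forall>A\<in>F. emeasure M A > 0"
  define I where "I = {B\<in>sets M. \<exists>G. countable G \<and> G \<subseteq> F \<and> B \<subseteq> \<Union>G}"
  have "sigma_ideal M I"
    unfolding sigma_ideal_def
  proof (intro conjI allI impI)
    show "I \<subseteq> sets M" unfolding I_def by blast
    have "{} \<in> I" unfolding I_def by (intro CollectI conjI exI[of _ "{}"]) auto
    then show "I \<noteq> {}" by blast
  next
    fix f :: "nat \<Rightarrow> 'a set" assume f: "range f \<subseteq> I"
    then have "\<forall>i. \<exists>G. countable G \<and> G \<subseteq> F \<and> f i \<subseteq> \<Union>G" unfolding I_def by blast
    then obtain G where G: "\<And>i. countable (G i) \<and> G i \<subseteq> F \<and> f i \<subseteq> \<Union>(G i)" by metis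
    have "range f \<subseteq> sets M" using f unfolding I_def by blast
    then have "(\<Union>i. f i) \<in> sets M" by (rule sets.countable_UN)
    moreover have "countable (\<Union>i. G i)" using G by (intro countable_UN) simp_all
    moreover have "(\<Union>i. G i) \<subseteq> F" using G by (simp add: UN_least)
    moreover have "(\<Union>i. f i) \<subseteq> \<Union>(\<Union>i. G i)"
    proof
      fix x assume "x \<in> (\<Union>i. f i)"
      then obtain i where "x \<in> f i" by blast
      then obtain B where "B \<in> G i" "x \<in> B" using G[of i] by blast
      then show "x \<in> \<Union>(\<Union>i. G i)" by blast
    qed
    ultimately show "(\<Union>i. f i) \<in> I" unfolding I_def by blast
  next
    fix B S assume "S \<in> I" "B \<in> sets M" "B \<subseteq> S"
    then show "B \<in> I" unfolding I_def by blast
  qed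
  then obtain L where L: "L \<in> I" "\<forall>S\<in>I. emeasure M (S - L) = 0"
    using SP unfolding sigma_principal_def by blast
  then obtain G where G: "countable G" "G \<subseteq> F" "L \<subseteq> \<Union>G" unfolding I_def by blast
  have "F \<subseteq> G"
  proof
    fix A assume A: "A \<in> F"
    show "A \<in> G"
    proof (rule ccontr)
      assume "A \<notin> G"
      have "A \<inter> B = {}" if "B \<in> G" for B
        using F(2) G(2) A that \<open>A \<notin> G\<close> by (metis disjointD subsetD)
      then have "A \<inter> \<Union>G = {}" by blast
      then have "A - L = A" using G(3) by blast
      moreover have "A \<in> I" unfolding I_def using A F(1)
        by (intro CollectI conjI exI[of _ "{A}"]) auto
      ultimately have "emeasure M A = 0" using L(2) by metis
      then show False using F(3) A by (metis less_irrefl)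
    qed
  qed
  then show "countable F" using G(1) countable_subset by blast
qed

lemma CCC_SP:
  fixes M :: "'a measure"
  assumes C: "CCC M" shows "sigma_principal M"
  unfolding sigma_principal_def
proof (intro allI impI)
  fix I assume I: "sigma_ideal M I"
  define P where "P = {A\<in>I. emeasure M A > 0}"
  define Z where "Z = {F. F \<subseteq> P \<and> disjoint F}"
  have "\<exists>F\<in>Z. \<forall>X\<in>Z. F \<subseteq> X \<longrightarrow> X = F"
  proof (rule Zorn_Lemma, intro ballI)
    fix Ch assume "Ch \<in> chains Z"
    then have Ch1: "Ch \<subseteq> Z" and Ch2: "\<And>x y. x\<in>Ch \<Longrightarrow> y\<in>Ch \<Longrightarrow> x \<subseteq> y \<or> y \<subseteq> x"
      unfolding chains_def chain_subset_def by blast+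
    have ZP: "x \<subseteq> P" "disjoint x" if "x \<in> Ch" for x using that Ch1 unfolding Z_def by blast+
    have "disjoint (\<Union>Ch)"
    proof (rule disjointI)
      fix a b assume "a \<in> \<Union>Ch" "b \<in> \<Union>Ch" "a \<noteq> b"
      then obtain x y where xy: "x \<in> Ch" "y \<in> Ch" "a \<in> x" "b \<in> y" by blast
      from Ch2[OF xy(1,2)] show "a \<inter> b = {}"
      proof
        assume "x \<subseteq> y"
        then show ?thesis using disjointD[OF ZP(2)[OF xy(2)]] xy \<open>a \<noteq> b\<close> by blast
      next
        assume "y \<subseteq> x"
        then show ?thesis using disjointD[OF ZP(2)[OF xy(1)]] xy \<open>a \<noteq> b\<close> by blast
      qed
    qed
    moreover have "\<Union>Ch \<subseteq> P" using ZP(1) by blast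
    ultimately show "\<Union>Ch \<in> Z" unfolding Z_def by blast
  qed
  then obtain F where FZ: "F \<in> Z" and max: "\<And>X. X \<in> Z \<Longrightarrow> F \<subseteq> X \<Longrightarrow> X = F"
    by blast
  have F: "F \<subseteq> P" "disjoint F" using FZ unfolding Z_def by blast+
  have IM: "I \<subseteq> sets M" using I unfolding sigma_ideal_def by blast
  have "F \<subseteq> sets M" using F(1) IM unfolding P_def by blast
  moreover have "\<forall>A\<in>F. emeasure M A > 0" using F(1) unfolding P_def by blast
  ultimately have "countable F" using C F(2) unfolding CCC_def by blast
  moreover have "F \<subseteq> I" using F(1) unfolding P_def by blast
  ultimately have LI: "\<Union>F \<in> I" by (rule ideal_countable_Union[OF I])
  show "\<exists>L\<in>I. \<forall>S\<in>I. emeasure M (S - L) = 0"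
  proof (intro bexI[OF _ LI] ballI)
    fix S assume S: "S \<in> I"
    show "emeasure M (S - \<Union>F) = 0"
    proof (rule ccontr)
      assume pos: "emeasure M (S - \<Union>F) \<noteq> 0"
      have "S - \<Union>F \<in> sets M" using S LI IM by (intro sets.Diff) blast+
      then have SI: "S - \<Union>F \<in> I"
        using I S unfolding sigma_ideal_def by (meson Diff_subset)
      have nF: "S - \<Union>F \<notin> F"
      proof
        assume "S - \<Union>F \<in> F"
        then have "S - \<Union>F = {}" by blast
        then show False using pos by (metis emeasure_empty)
      qed
      have "insert (S - \<Union>F) F \<subseteq> P"
        using F(1) SI pos unfolding P_def by (simp add: zero_less_iff_neq_zero)
      moreover have "disjoint (insert (S - \<Union>F) F)"
      proof (rule disjointI)
        fix a b assume ab: "a \<in> insert (S - \<Union>F) F" "b \<in> insert (S - \<Union>F) F" "a \<noteq> b"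
        show "a \<inter> b = {}"
        proof (cases "a \<in> F \<and> b \<in> F")
          case True then show ?thesis using disjointD[OF F(2)] ab(3) by blast
        next
          case False
          then have "(a = S - \<Union>F \<and> b \<in> F) \<or> (b = S - \<Union>F \<and> a \<in> F)" using ab by blast
          then show ?thesis by blast
        qed
      qed
      ultimately have "insert (S - \<Union>F) F \<in> Z" unfolding Z_def by blast
      then have "insert (S - \<Union>F) F = F" using max by blast
      then show False using nF by blast
    qed
  qed
qed

lemma SP_loc:
  assumes "sigma_principal M" shows "localizable M"
  unfolding localizable_def
proof (intro allI impI)
  fix I assume I: "sigma_ideal M I"
  then obtain L where L: "L \<in> I" "\<forall>S\<in>I. emeasure M (S - L) = 0"
    using assms unfolding sigma_principal_def by blast
  have "L \<in> sets M" using I L unfolding sigma_ideal_def by blast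
  then show "\<exists>L\<in>sets M. (\<forall>S\<in>I. emeasure M (S - L) = 0) \<and>
        (\<forall>B\<in>sets M. (\<forall>S\<in>I. emeasure M (S - B) = 0) \<longrightarrow> emeasure M (L - B) = 0)"
    using L by blast
qed

theorem theoremA1:
  fixes M :: "'a measure"
  shows "(finite_measure M \<longrightarrow> sigma_finite_measure M) \<and>
         (sigma_finite_measure M \<longrightarrow> sigma_principal M) \<and>
         (sigma_principal M \<longrightarrow> CCC M) \<and>
         (CCC M \<longrightarrow> localizable M) \<and>
         (CCC M \<longrightarrow> sigma_principal M)"
proof (intro conjI impI)
  show "finite_measure M \<Longrightarrow> sigma_finite_measure M"
    by (simp add: finite_measure_def)
  show "sigma_finite_measure M \<Longrightarrow> sigma_principal M" by (intro CCC_SP sf_CCC)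
  show "sigma_principal M \<Longrightarrow> CCC M" by (rule SP_CCC)
  show "CCC M \<Longrightarrow> localizable M" by (intro SP_loc CCC_SP)
  show "CCC M \<Longrightarrow> sigma_principal M" by (rule CCC_SP)
qed

end
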